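(* Fix reals $\mu>\nu>0$, reals $Q_\mu,Q_\nu,E_\mu,E_\nu$, and $Y_0\in[0,1]$. Let $S$ be the set of all configurations $(Y_i,e_i)_{i\ge 1}$ with $Y_i,e_i\in[0,1]$ for all $i\ge1$ which, together with the given $Y_0$ and $e_0=1/2$, satisfy the decoy-state constraints (DS). Define $$K=\frac{1}{\mu}e^{\mu}E_\mu Q_\mu-\frac{1}{\nu}e^{\nu}E_\nu Q_\nu+\frac{\mu-\nu}{2\mu\nu}Y_0,\qquad \beta_i=\frac{\mu^{i-1}-\nu^{i-1}}{i!}\ (i\ge3),$$ assume $0\le K<\sum_{i\ge 3}\beta_i$, and let $k_0$ be the smallest integer $\ge 3$ with $\sum_{i=k_0}^\infty\beta_i\le K$; assume $k_0\ge 4$. Define a configuration $(Y_i^\circ,e_i^\circ)_{i\ge1}$ by: $e_i^\circ=1$ for all $i\ge3$; $Y_i^\circ=0$ for $3\le i\le k_0-2$; $Y_{k_0-1}^\circ=\frac{(k_0-1)!}{\mu^{k_0-2}-\nu^{k_0-2}}\Big(K-\sum_{i=k_0}^\infty\beta_i\Big)$; $Y_i^\circ=1$ for $i\ge k_0$; $Y_1^\circ,Y_2^\circ$ are the unique solution of the two gain equations of (DS) (with the given $Y_0$ and these $Y_i^\circ$, $i\ge3$); $e_1^\circ Y_1^\circ$ is determined by the two error equations of (DS) (which then force $e_2^\circ Y_2^\circ=0$), and $e_2^\circ=0$. Assume $Y_1^\circ>0$, that this configuration lies in $S$, and that $0<e_1^\circ\le 1/2$. Then for every $(Y_i,e_i)_{i\ge1}\in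 S$, $$Y_1\big[1-h(e_1)\big]\ \ge\ Y_1^\circ\big[1-h(e_1^\circ)\big],$$ i.e. $(Y_i^\circ,e_i^\circ)$ minimizes $Y_1[1-h(e_1)]$ over $S$.
   Context: $h(x)=-x\log_2 x-(1-x)\log_2(1-x)$ is the binary entropy function on $[0,1]$ (with $0\log_2 0=0$). For reals $\mu>\nu>0$, the decoy-state constraints (DS) on sequences $(Y_i)_{i\ge0},(e_i)_{i\ge0}$ with values in $[0,1]$ are $$Q_\mu=\sum_{i=0}^\infty \frac{\mu^i e^{-\mu}}{i!}Y_i,\quad Q_\nu=\sum_{i=0}^\infty \frac{\nu^i e^{-\nu}}{i!}Y_i,\quad E_\mu Q_\mu=\sum_{i=0}^\infty \frac{\mu^i e^{-\mu}}{i!}Y_ie_i,\quad E_\nu Q_\nu=\sum_{i=0}^\infty \frac{\nu^i e^{-\nu}}{i!}Y_ie_i$$ (the first two are the "gain equations", the last two the "error equations"). *)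

theory Defs
  imports Complex_Main
begin

definition xlog2 :: "real \<Rightarrow> real" where
  "xlog2 x = (if x = 0 then 0 else x * log 2 x)"

definition bin_entropy :: "real \<Rightarrow> real" where
  "bin_entropy x = - xlog2 x - xlog2 (1 - x)"

definition poisson :: "real \<Rightarrow> nat \<Rightarrow> real" where
  "poisson m i = m ^ i * exp (- m) / fact i"

definition DS :: "real \<Rightarrow> real \<Rightarrow> real \<Rightarrow> real \<Rightarrow> real \<Rightarrow> real
                   \<Rightarrow> (nat \<Rightarrow> real) \<Rightarrow> (nat \<Rightarrow> real) \<Rightarrow> bool" where
  "DS \<mu> \<nu> Q\<mu> Q\<nu> E\<mu> E\<nu> Y e \<longleftrightarrow>
     Q\<mu> = (\<Sum>i. poisson \<mu> i * Y i) \<and>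
     Q\<nu> = (\<Sum>i. poisson \<nu> i * Y i) \<and>
     E\<mu> * Q\<mu> = (\<Sum>i. poisson \<mu> i * Y i * e i) \<and>
     E\<nu> * Q\<nu> = (\<Sum>i. poisson \<nu> i * Y i * e i)"

text \<open>The set S: configurations (Y_i,e_i)_{i>=1} in [0,1], represented as full
  sequences with Y 0 = Y0 and e 0 = 1/2, satisfying (DS).\<close>
definition configS :: "real \<Rightarrow> real \<Rightarrow> real \<Rightarrow> real \<Rightarrow> real \<Rightarrow> real \<Rightarrow> real
                        \<Rightarrow> ((nat \<Rightarrow> real) \<times> (nat \<Rightarrow> real)) set" where
  "configS \<mu> \<nu> Q\<mu> Q\<nu> E\<mu> E\<nu> Y0 =
     {(Y, e). Y 0 = Y0 \<and> e 0 = 1/2 \<and>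
              (\<forall>i\<ge>1. Y i \<in> {0..1} \<and> e i \<in> {0..1}) \<and>
              DS \<mu> \<nu> Q\<mu> Q\<nu> E\<mu> E\<nu> Y e}"

definition Kconst :: "real \<Rightarrow> real \<Rightarrow> real \<Rightarrow> real \<Rightarrow> real \<Rightarrow> real \<Rightarrow> real \<Rightarrow> real" where
  "Kconst \<mu> \<nu> Q\<mu> Q\<nu> E\<mu> E\<nu> Y0 =
     exp \<mu> * E\<mu> * Q\<mu> / \<mu> - exp \<nu> * E\<nu> * Q\<nu> / \<nu> + (\<mu> - \<nu>) / (2 * \<mu> * \<nu>) * Y0"

definition beta :: "real \<Rightarrow> real \<Rightarrow> nat \<Rightarrow> real" where
  "beta \<mu> \<nu> i = (\<mu> ^ (i - 1) - \<nu> ^ (i - 1)) / fact i"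

definition tail_beta :: "real \<Rightarrow> real \<Rightarrow> nat \<Rightarrow> real" where
  "tail_beta \<mu> \<nu> k = (\<Sum>j. beta \<mu> \<nu> (j + k))"

definition k0 :: "real \<Rightarrow> real \<Rightarrow> real \<Rightarrow> nat" where
  "k0 \<mu> \<nu> K = (LEAST k. 3 \<le> k \<and> tail_beta \<mu> \<nu> k \<le> K)"

definition Yhigh :: "real \<Rightarrow> real \<Rightarrow> real \<Rightarrow> nat \<Rightarrow> real" where
  "Yhigh \<mu> \<nu> K i =
     (let k = k0 \<mu> \<nu> K in
      if i \<le> k - 2 then 0
      else if i = k - 1 then fact (k - 1) / (\<mu> ^ (k - 2) - \<nu> ^ (k - 2)) * (K - tail_beta \<mu> \<nu> k)
      else 1)"

definition Yseq :: "real \<Rightarrow> real \<Rightarrow> real \<Rightarrow> (nat \<Rightarrow> real) \<Rightarrow> nat \<Rightarrow> real" where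
  "Yseq y0 y1 y2 T i = (if i = 0 then y0 else if i = 1 then y1 else if i = 2 then y2 else T i)"

definition Y12circ :: "real \<Rightarrow> real \<Rightarrow> real \<Rightarrow> real \<Rightarrow> real \<Rightarrow> real \<Rightarrow> real \<times> real" where
  "Y12circ \<mu> \<nu> Q\<mu> Q\<nu> Y0 K =
     (THE (y1, y2). Q\<mu> = (\<Sum>i. poisson \<mu> i * Yseq Y0 y1 y2 (Yhigh \<mu> \<nu> K) i) \<and>
                    Q\<nu> = (\<Sum>i. poisson \<nu> i * Yseq Y0 y1 y2 (Yhigh \<mu> \<nu> K) i))"

text \<open>(e_1^circ Y_1^circ, e_2^circ Y_2^circ): the unique solution of the two error equations,
  with Y_0 e_0 = Y0/2 and Y_i^circ e_i^circ = Y_i^circ for i >= 3.\<close>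
definition EY12circ :: "real \<Rightarrow> real \<Rightarrow> real \<Rightarrow> real \<Rightarrow> real \<Rightarrow> real \<Rightarrow> real \<Rightarrow> real \<Rightarrow> real \<times> real" where
  "EY12circ \<mu> \<nu> Q\<mu> Q\<nu> E\<mu> E\<nu> Y0 K =
     (THE (a1, a2). E\<mu> * Q\<mu> = (\<Sum>i. poisson \<mu> i * Yseq (Y0 / 2) a1 a2 (Yhigh \<mu> \<nu> K) i) \<and>
                    E\<nu> * Q\<nu> = (\<Sum>i. poisson \<nu> i * Yseq (Y0 / 2) a1 a2 (Yhigh \<mu> \<nu> K) i))"

definition Ycirc :: "real \<Rightarrow> real \<Rightarrow> real \<Rightarrow> real \<Rightarrow> real \<Rightarrow> real \<Rightarrow> real \<Rightarrow> nat \<Rightarrow> real" where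
  "Ycirc \<mu> \<nu> Q\<mu> Q\<nu> E\<mu> E\<nu> Y0 =
     (let K = Kconst \<mu> \<nu> Q\<mu> Q\<nu> E\<mu> E\<nu> Y0; p = Y12circ \<mu> \<nu> Q\<mu> Q\<nu> Y0 K in
      Yseq Y0 (fst p) (snd p) (Yhigh \<mu> \<nu> K))"

definition ecirc :: "real \<Rightarrow> real \<Rightarrow> real \<Rightarrow> real \<Rightarrow> real \<Rightarrow> real \<Rightarrow> real \<Rightarrow> nat \<Rightarrow> real" where
  "ecirc \<mu> \<nu> Q\<mu> Q\<nu> E\<mu> E\<nu> Y0 =
     (let K = Kconst \<mu> \<nu> Q\<mu> Q\<nu> E\<mu> E\<nu> Y0;
          y1 = fst (Y12circ \<mu> \<nu> Q\<mu> Q\<nu> Y0 K);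
          a1 = fst (EY12circ \<mu> \<nu> Q\<mu> Q\<nu> E\<mu> E\<nu> Y0 K) in
      Yseq (1/2) (a1 / y1) 0 (\<lambda>_. 1))"

end

theory Submission
  imports Defs
begin


lemma xl: assumes "0 \<le> x" "0 < c"
  shows "xlog2 x \<ge> x * log 2 c + (x - c) / ln 2"
proof (cases "x = 0")
  case True thus ?thesis using assms by (simp add: xlog2_def)
next
  case False
  hence x: "x > 0" using assms by simp
  have "ln (c/x) \<le> c/x - 1" using ln_le_minus_one[of "c/x"] x assms by simp
  hence "ln c - ln x \<le> c/x - 1" using x assms by (simp add: ln_div)
  hence "x * (ln c - ln x) \<le> x * (c/x - 1)" using x by (simp add: mult_left_mono)
  hence h: "x * ln x - x * ln c \<ge> x - c" using x by (simp add: algebra_simps)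
  have "xlog2 x - x * log 2 c = (x * ln x - x * ln c) / ln 2"
    using False by (simp add: xlog2_def log_def diff_divide_distrib)
  also have "\<dots> \<ge> (x - c) / ln 2" using h by (simp add: divide_right_mono)
  finally show ?thesis by simp
qed

lemma tangent: assumes "0 < c" "c < 1" "0 \<le> x" "x \<le> 1"
  shows "1 - bin_entropy x \<ge> (1 + log 2 (1-c)) - (log 2 (1-c) - log 2 c) * x"
proof -
  have a: "xlog2 x \<ge> x * log 2 c + (x - c) / ln 2" using xl assms by simp
  have b: "xlog2 (1-x) \<ge> (1-x) * log 2 (1-c) + ((1-x) - (1-c)) / ln 2" using xl[of "1-x" "1-c"] assms by simp
  have z: "(x - c) / ln 2 + ((1-x) - (1-c)) / ln 2 = 0" by (simp add: add_divide_distrib[symmetric])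
  have e: "(1 + log 2 (1-c)) - (log 2 (1-c) - log 2 c) * x = 1 + (x * log 2 c + (1-x) * log 2 (1-c))"
    by (simp add: algebra_simps)
  show ?thesis unfolding bin_entropy_def e using a b z by linarith
qed

lemma ident: assumes "0 < c" "c < 1"
  shows "1 - bin_entropy c = (1 + log 2 (1-c)) - (log 2 (1-c) - log 2 c) * c"
  using assms unfolding bin_entropy_def xlog2_def by (simp add: algebra_simps)

lemma summ_bdd: assumes "m \<ge> 0" "\<And>i. \<bar>Z i\<bar> \<le> 1"
  shows "summable (\<lambda>i. poisson m i * Z i)"
proof (rule summable_comparison_test'[where N=0])
  show "summable (\<lambda>i. exp (-m) * (inverse (fact i) * m^i))"
    by (rule summable_mult[OF summable_exp])
  fix n :: nat
  have "norm (poisson m n * Z n) = poisson m n * \<bar>Z n\<bar>"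
    using assms by (simp add: poisson_def abs_mult)
  also have "\<dots> \<le> poisson m n * 1" using assms(2)[of n] assms(1)
    by (intro mult_left_mono) (auto simp: poisson_def)
  finally show "norm (poisson m n * Z n) \<le> exp (-m) * (inverse (fact n) * m^n)"
    by (simp add: poisson_def field_simps)
qed

lemma sums_one_neg: fixes f :: "nat \<Rightarrow> real" assumes "f sums 0" "\<And>i. i \<noteq> 1 \<Longrightarrow> f i \<ge> 0" shows "f 1 \<le> 0"
proof -
  have s: "(\<lambda>i. f i - (if i = 1 then f i else 0)) sums (0 - f 1)"
    by (rule sums_diff[OF assms(1) sums_single])
  have le: "0 \<le> f i - (if i = 1 then f i else 0)" for i
    using assms(2)[of i] by (cases "i = 1") simp_all
  have "0 \<le> 0 - f 1"
    by (rule sums_le[OF le sums_zero s])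
  thus ?thesis by simp
qed

lemma A_ident: fixes a b :: real
  shows "(a^k - b^k) * (a^(Suc (Suc k)) - b^(Suc (Suc k))) - (a^Suc k - b^Suc k)^2 = -((a*b)^k * (a-b)^2)"
  by (simp add: power2_eq_square algebra_simps power_mult_distrib)

lemma rho_mono: fixes a b :: real assumes "0 < b" "b < a"
  shows "\<And>n n'. n \<le> n' \<Longrightarrow> (a^(n-1) - b^(n-1)) / (a^n - b^n) \<le> (a^(n'-1) - b^(n'-1)) / (a^n' - b^n')"
proof -
  let ?A = "\<lambda>n. a^n - b^n"
  have pos: "?A n > 0" if "n \<ge> 1" for n using that assms
    by (simp add: power_strict_mono)
  have step: "?A (n-1) / ?A n \<le> ?A (Suc n - 1) / ?A (Suc n)" for n
  proof (cases n)
    case 0 thus ?thesis by simp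
  next
    case (Suc k)
    have nn: "(a*b)^k * (a-b)^2 \<ge> 0" using assms by simp
    have "?A k * ?A (Suc (Suc k)) \<le> (?A (Suc k))^2"
      using A_ident[of a k b] nn by linarith
    hence "?A k * ?A (Suc (Suc k)) \<le> ?A (Suc k) * ?A (Suc k)" by (simp only: power2_eq_square)
    thus ?thesis using Suc pos[of "Suc k"] pos[of "Suc (Suc k)"]
      by (simp add: divide_simps)
  qed
  show "\<And>n n'. n \<le> n' \<Longrightarrow> ?A (n-1) / ?A n \<le> ?A (n'-1) / ?A n'"
    by (rule lift_Suc_mono_le[of "\<lambda>n. ?A (n-1) / ?A n"]) (use step in auto)
qed


lemma term_nonneg:
  fixes \<mu> \<nu> p s y ee yc :: real and i m :: nat
  defines "A \<equiv> \<lambda>n. \<mu>^n - \<nu>^n"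
  defines "\<rho> \<equiv> \<lambda>n. A (n-1) / A n"
  assumes "0 < \<nu>" "\<nu> < \<mu>" "p \<ge> 0" "s \<ge> 0" "3 \<le> i" "4 \<le> m"
    "0 \<le> y" "y \<le> 1" "0 \<le> ee" "ee \<le> 1"
    "i \<le> m - 2 \<Longrightarrow> yc = 0" "m \<le> i \<Longrightarrow> yc = 1"
  shows "0 \<le> (p * (\<nu>^2*\<mu>^i - \<mu>^2*\<nu>^i) * (y - yc) - (p+s) * (\<nu>^2*\<mu>^i - \<mu>^2*\<nu>^i) * (y*ee - yc*1)
     + (s * \<mu>^2 * \<nu>^2 * \<rho> (m-2)) * (\<mu>^i/\<mu> - \<nu>^i/\<nu>) * (y*ee - yc*1)) / fact i"
proof -
  define E where "E = y*ee - yc*1"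
  have Apos: "A n > 0" if "n \<ge> 1" for n using that assms(3,4) unfolding A_def
    by (simp add: power_strict_mono)
  have W: "\<nu>^2*\<mu>^i - \<mu>^2*\<nu>^i = \<mu>^2*\<nu>^2 * A (i-2)"
  proof -
    obtain j where j: "i = j + 2" using assms(7) by (intro that[of "i-2"]) simp
    have "\<mu>^i = \<mu>^2 * \<mu>^(i-2)" "\<nu>^i = \<nu>^2 * \<nu>^(i-2)" unfolding j
      by (simp_all add: power_add power2_eq_square)
    thus ?thesis unfolding A_def by (simp add: algebra_simps)
  qed
  have B: "\<mu>^i/\<mu> - \<nu>^i/\<nu> = A (i-1)"
  proof -
    have "\<mu>^i = \<mu> * \<mu>^(i-1)" "\<nu>^i = \<nu> * \<nu>^(i-1)" using assms(7)
      by (simp_all add: power_Suc[symmetric])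
    thus ?thesis unfolding A_def using assms(3,4) by simp
  qed
  have "A (i-2) > 0" using Apos[of "i-2"] assms(7) by simp
  hence Wnn: "\<mu>^2*\<nu>^2 * A (i-2) \<ge> 0" by simp
  have DE: "(y - yc) - E \<ge> 0"
  proof -
    have "(y - yc) - E = y * (1 - ee)" unfolding E_def by (simp add: algebra_simps)
    thus ?thesis using assms by simp
  qed
  have Ai1: "A (i-1) > 0" using Apos[of "i-1"] assms(7) by simp
  moreover have "i - 1 - 1 = i - 2" by simp
  ultimately have rr: "A (i-2) = \<rho> (i-1) * A (i-1)"
    unfolding \<rho>_def by simp
  have key: "0 \<le> E * (\<rho> (m-2) - \<rho> (i-1))"
  proof (cases "i \<le> m - 2")
    case True
    hence "E \<ge> 0" using assms E_def by simp
    moreover have "\<rho> (i-1) \<le> \<rho> (m-2)" unfolding \<rho>_def A_def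
      by (rule rho_mono) (use assms(3,4) True in auto)
    ultimately show ?thesis by simp
  next
    case F: False
    show ?thesis
    proof (cases "i = m - 1")
      case True hence "i - 1 = m - 2" by simp
      thus ?thesis by simp
    next
      case False
      hence "m \<le> i" using F by simp
      hence "E \<le> 0" using assms E_def by (simp add: mult_le_one)
      moreover have "\<rho> (m-2) \<le> \<rho> (i-1)" unfolding \<rho>_def A_def
        by (rule rho_mono) (use assms(3,4) \<open>m \<le> i\<close> in auto)
      ultimately show ?thesis by (simp add: mult_nonpos_nonpos)
    qed
  qed
  have num: "p * (\<mu>^2*\<nu>^2 * A (i-2)) * (y - yc) - (p+s) * (\<mu>^2*\<nu>^2 * A (i-2)) * E
     + (s * \<mu>^2 * \<nu>^2 * \<rho> (m-2)) * A (i-1) * E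
     = p * (\<mu>^2*\<nu>^2 * A (i-2)) * ((y - yc) - E) + (s*\<mu>^2*\<nu>^2 * A (i-1)) * (E * (\<rho> (m-2) - \<rho> (i-1)))"
    unfolding rr by (simp add: algebra_simps)
  have "0 \<le> p * (\<mu>^2*\<nu>^2 * A (i-2)) * ((y - yc) - E) + (s*\<mu>^2*\<nu>^2 * A (i-1)) * (E * (\<rho> (m-2) - \<rho> (i-1)))"
  proof (rule add_nonneg_nonneg)
    show "0 \<le> p * (\<mu>^2*\<nu>^2 * A (i-2)) * ((y - yc) - E)"
      using assms(5) Wnn DE by simp
    have "0 \<le> s*\<mu>^2*\<nu>^2 * A (i-1)" using assms(6) \<open>A (i-1) > 0\<close> by simp
    thus "0 \<le> (s*\<mu>^2*\<nu>^2 * A (i-1)) * (E * (\<rho> (m-2) - \<rho> (i-1)))"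
      using key by (rule mult_nonneg_nonneg)
  qed
  thus ?thesis unfolding W B E_def[symmetric] num by simp
qed


lemma lincomb:
  fixes a b em en f p q lam W B D E :: real
  assumes "em > 0" "en > 0" "f > 0" "mu > 0" "nu > 0"
    "W = nu^2*a - mu^2*b" "B = a/mu - b/nu"
  shows "(p * W * D - q * W * E + lam * B * E) / f =
     (p*nu^2*em) * (a * inverse em / f * D) + (-p*mu^2*en) * (b * inverse en / f * D)
   + ((-q*nu^2 + lam/mu)*em) * (a * inverse em / f * E) + ((q*mu^2 - lam/nu)*en) * (b * inverse en / f * E)"
  using assms(1-5) unfolding assms(6,7) by (simp add: field_simps)

lemma poisson_eq: "poisson m i = m^i * inverse (exp m) / fact i"
  by (simp add: poisson_def exp_minus)



theorem theorem1:
  fixes \<mu> \<nu> Q\<mu> Q\<nu> E\<mu> E\<nu> Y0 :: real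
    and Y e :: "nat \<Rightarrow> real"
  assumes "\<mu> > \<nu>" and "\<nu> > 0"
    and "Y0 \<in> {0..1}"
    and "0 \<le> Kconst \<mu> \<nu> Q\<mu> Q\<nu> E\<mu> E\<nu> Y0"
    and "Kconst \<mu> \<nu> Q\<mu> Q\<nu> E\<mu> E\<nu> Y0 < tail_beta \<mu> \<nu> 3"
    and "\<exists>k\<ge>3. tail_beta \<mu> \<nu> k \<le> Kconst \<mu> \<nu> Q\<mu> Q\<nu> E\<mu> E\<nu> Y0"
    and "k0 \<mu> \<nu> (Kconst \<mu> \<nu> Q\<mu> Q\<nu> E\<mu> E\<nu> Y0) \<ge> 4"
    and "Ycirc \<mu> \<nu> Q\<mu> Q\<nu> E\<mu> E\<nu> Y0 1 > 0"
    and "(Ycirc \<mu> \<nu> Q\<mu> Q\<nu> E\<mu> E\<nu> Y0, ecirc \<mu> \<nu> Q\<mu> Q\<nu> E\<mu> E\<nu> Y0) \<in> configS \<mu> \<nu> Q\<mu> Q\<nu> E\<mu> E\<nu> Y0"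
    and "0 < ecirc \<mu> \<nu> Q\<mu> Q\<nu> E\<mu> E\<nu> Y0 1"
    and "ecirc \<mu> \<nu> Q\<mu> Q\<nu> E\<mu> E\<nu> Y0 1 \<le> 1/2"
    and "(Y, e) \<in> configS \<mu> \<nu> Q\<mu> Q\<nu> E\<mu> E\<nu> Y0"
  shows "Y 1 * (1 - bin_entropy (e 1)) \<ge>
         Ycirc \<mu> \<nu> Q\<mu> Q\<nu> E\<mu> E\<nu> Y0 1 * (1 - bin_entropy (ecirc \<mu> \<nu> Q\<mu> Q\<nu> E\<mu> E\<nu> Y0 1))"
proof -
  note A = assms
  define K where "K = Kconst \<mu> \<nu> Q\<mu> Q\<nu> E\<mu> E\<nu> Y0"
  define m where "m = k0 \<mu> \<nu> K"
  define Yc where "Yc = Ycirc \<mu> \<nu> Q\<mu> Q\<nu> E\<mu> E\<nu> Y0"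
  define ec where "ec = ecirc \<mu> \<nu> Q\<mu> Q\<nu> E\<mu> E\<nu> Y0"
  have m4: "4 \<le> m" using A(7) unfolding m_def K_def .
  have cS: "Yc 0 = Y0" "ec 0 = 1/2" "\<And>i. i \<ge> 1 \<Longrightarrow> Yc i \<in> {0..1} \<and> ec i \<in> {0..1}"
      "DS \<mu> \<nu> Q\<mu> Q\<nu> E\<mu> E\<nu> Yc ec"
    using A(9) unfolding Yc_def ec_def configS_def by auto
  have S: "Y 0 = Y0" "e 0 = 1/2" "\<And>i. i \<ge> 1 \<Longrightarrow> Y i \<in> {0..1} \<and> e i \<in> {0..1}"
      "DS \<mu> \<nu> Q\<mu> Q\<nu> E\<mu> E\<nu> Y e"
    using A(12) unfolding configS_def by auto
  have ec_hi: "ec i = 1" if "i \<ge> 3" for i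
    using that unfolding ec_def ecirc_def Let_def Yseq_def by simp
  have ec2: "ec 2 = 0" unfolding ec_def ecirc_def Let_def Yseq_def by simp
  have Yc_hi: "Yc i = Yhigh \<mu> \<nu> K i" if "i \<ge> 3" for i
    using that unfolding Yc_def Ycirc_def Let_def Yseq_def K_def by simp
  have Yc_lo: "Yc i = 0" if "i \<ge> 3" "i \<le> m - 2" for i
    using that Yc_hi[OF that(1)] unfolding Yhigh_def Let_def m_def by simp
  have Yc_up: "Yc i = 1" if "i \<ge> 3" "m \<le> i" for i
  proof -
    have "\<not> i \<le> m - 2" "i \<noteq> m - 1" using that m4 by arith+
    thus ?thesis using Yc_hi[OF that(1)] unfolding Yhigh_def Let_def m_def by simp
  qed
  have mu0: "\<mu> > 0" using A(1,2) by simp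
  have bY: "\<bar>Y i\<bar> \<le> 1" "\<bar>Y i * e i\<bar> \<le> 1" for i
  proof -
    have "Y i \<in> {0..1} \<and> e i \<in> {0..1}"
      using S A(3) by (cases "i = 0") auto
    thus "\<bar>Y i\<bar> \<le> 1" "\<bar>Y i * e i\<bar> \<le> 1" by (auto simp: abs_mult mult_le_one)
  qed
  have bYc: "\<bar>Yc i\<bar> \<le> 1" "\<bar>Yc i * ec i\<bar> \<le> 1" for i
  proof -
    have "Yc i \<in> {0..1} \<and> ec i \<in> {0..1}"
      using cS A(3) by (cases "i = 0") auto
    thus "\<bar>Yc i\<bar> \<le> 1" "\<bar>Yc i * ec i\<bar> \<le> 1" by (auto simp: abs_mult mult_le_one)
  qed
  have sm: "(\<lambda>i. poisson r i * Z i) sums (\<Sum>i. poisson r i * Z i)"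
    if "r \<ge> 0" "\<And>i. \<bar>Z i\<bar> \<le> 1" for r and Z :: "nat \<Rightarrow> real"
    using summ_bdd[OF that] by (rule summable_sums)
  have assoc: "(\<Sum>i. poisson r i * Z i * W i) = (\<Sum>i. poisson r i * (Z i * W i))" for r and Z W :: "nat \<Rightarrow> real"
    by (simp add: mult.assoc)
  define D where "D i = Y i - Yc i" for i
  define E where "E i = Y i * e i - Yc i * ec i" for i
  have sD: "(\<lambda>i. poisson r i * D i) sums 0" if "r = \<mu> \<or> r = \<nu>" for r
  proof -
    have r0: "r \<ge> 0" using that A(1,2) by auto
    have "(\<lambda>i. poisson r i * Y i - poisson r i * Yc i) sums
       ((\<Sum>i. poisson r i * Y i) - (\<Sum>i. poisson r i * Yc i))"
      by (rule sums_diff[OF sm[OF r0 bY(1)] sm[OF r0 bYc(1)]])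
    moreover have "(\<Sum>i. poisson r i * Y i) = (\<Sum>i. poisson r i * Yc i)"
      using that S(4) cS(4) unfolding DS_def by auto
    ultimately show ?thesis unfolding D_def by (simp add: right_diff_distrib)
  qed
  have sE: "(\<lambda>i. poisson r i * E i) sums 0" if "r = \<mu> \<or> r = \<nu>" for r
  proof -
    have r0: "r \<ge> 0" using that A(1,2) by auto
    have "(\<lambda>i. poisson r i * (Y i * e i) - poisson r i * (Yc i * ec i)) sums
       ((\<Sum>i. poisson r i * (Y i * e i)) - (\<Sum>i. poisson r i * (Yc i * ec i)))"
      by (rule sums_diff[OF sm[OF r0 bY(2)] sm[OF r0 bYc(2)]])
    moreover have "(\<Sum>i. poisson r i * (Y i * e i)) = (\<Sum>i. poisson r i * (Yc i * ec i))"
      using that S(4) cS(4) unfolding DS_def assoc by auto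
    ultimately show ?thesis unfolding E_def by (simp add: right_diff_distrib)
  qed
  define x where "x = ec 1"
  have x0: "0 < x" and xh: "x \<le> 1/2" using A(10,11) unfolding x_def ec_def by auto
  define p where "p = 1 + log 2 (1-x)"
  define s where "s = - 1 - log 2 x"
  define q where "q = p + s"
  have q_eq: "q = log 2 (1-x) - log 2 x" unfolding q_def p_def s_def by simp
  have lhalf: "log 2 (1/2) = -1" by (simp add: log_divide)
  have p0: "p \<ge> 0"
  proof -
    have "log 2 (1/2) \<le> log 2 (1-x)" using xh x0 by (subst log_le_cancel_iff) auto
    thus ?thesis unfolding p_def lhalf by simp
  qed
  have s0: "s \<ge> 0"
  proof -
    have "log 2 x \<le> log 2 (1/2)" using xh x0 by (subst log_le_cancel_iff) auto
    thus ?thesis unfolding s_def lhalf by simp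
  qed
  define \<rho> where "\<rho> n = (\<mu>^(n-1) - \<nu>^(n-1)) / (\<mu>^n - \<nu>^n)" for n
  define lam where "lam = s * \<mu>^2 * \<nu>^2 * \<rho> (m-2)"
  have rho0: "\<rho> n \<ge> 0" for n
  proof -
    have "\<mu>^(n-1) \<ge> \<nu>^(n-1)" "\<mu>^n \<ge> \<nu>^n" using A(1,2) by (auto intro: power_mono)
    thus ?thesis unfolding \<rho>_def by simp
  qed
  have lam0: "lam \<ge> 0" unfolding lam_def using s0 rho0 by simp
  define W where "W i = \<nu>^2*\<mu>^i - \<mu>^2*\<nu>^i" for i
  define B where "B i = \<mu>^i/\<mu> - \<nu>^i/\<nu>" for i
  define T where "T i = (p * W i * D i - q * W i * E i + lam * B i * E i) / fact i" for i
  have Tsum: "T sums 0"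
  proof -
    have "(\<lambda>i. (p*\<nu>^2*exp \<mu>) * (poisson \<mu> i * D i) + (-p*\<mu>^2*exp \<nu>) * (poisson \<nu> i * D i)
      + ((-q*\<nu>^2 + lam/\<mu>)*exp \<mu>) * (poisson \<mu> i * E i) + ((q*\<mu>^2 - lam/\<nu>)*exp \<nu>) * (poisson \<nu> i * E i))
      sums ((p*\<nu>^2*exp \<mu>) * 0 + (-p*\<mu>^2*exp \<nu>) * 0 + ((-q*\<nu>^2 + lam/\<mu>)*exp \<mu>) * 0 + ((q*\<mu>^2 - lam/\<nu>)*exp \<nu>) * 0)"
      by (intro sums_add sums_mult sD sE) auto
    moreover have "T = (\<lambda>i. (p*\<nu>^2*exp \<mu>) * (poisson \<mu> i * D i) + (-p*\<mu>^2*exp \<nu>) * (poisson \<nu> i * D i)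
      + ((-q*\<nu>^2 + lam/\<mu>)*exp \<mu>) * (poisson \<mu> i * E i) + ((q*\<mu>^2 - lam/\<nu>)*exp \<nu>) * (poisson \<nu> i * E i))"
      unfolding T_def poisson_eq
      by (rule ext, rule lincomb) (use mu0 A(2) in \<open>auto simp: W_def B_def\<close>)
    ultimately show ?thesis by (simp only:) simp
  qed
  have Tnn: "T i \<ge> 0" if "i \<noteq> 1" for i
  proof -
    have h3: "i = 0 \<or> i = 2 \<or> 3 \<le> i" using that by arith
    consider "i = 0" | "i = 2" | "i \<ge> 3" using h3 by blast
    thus ?thesis
    proof cases
      case 1
      have "E 0 = 0" "D 0 = 0" unfolding D_def E_def S(1,2) cS(1,2) by simp_all
      thus ?thesis unfolding T_def 1 by simp
    next
      case 2
      have "W 2 = 0" unfolding W_def by simp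
      moreover have "B 2 = \<mu> - \<nu>" unfolding B_def by (simp add: power2_eq_square)
      moreover have "E 2 \<ge> 0" unfolding E_def ec2 using S(3)[of 2] by simp
      ultimately show ?thesis unfolding T_def 2 using lam0 A(1) by simp
    next
      case 3
      have ye: "Y i \<in> {0..1} \<and> e i \<in> {0..1}" using S(3) 3 by simp
      have "0 \<le> (p * W i * (Y i - Yc i) - (p+s) * W i * (Y i * e i - Yc i*1)
          + (s * \<mu>^2 * \<nu>^2 * \<rho> (m-2)) * B i * (Y i * e i - Yc i*1)) / fact i"
        unfolding W_def B_def \<rho>_def
        by (rule term_nonneg) (use A(1,2) p0 s0 3 m4 ye Yc_lo Yc_up in auto)
      thus ?thesis unfolding T_def D_def E_def q_def lam_def ec_hi[OF 3] .
    qed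
  qed
  have T1: "T 1 \<le> 0" by (rule sums_one_neg[OF Tsum Tnn])
  have W1: "W 1 < 0"
  proof -
    have "W 1 = \<mu> * \<nu> * (\<nu> - \<mu>)" unfolding W_def by (simp add: power2_eq_square algebra_simps)
    thus ?thesis using mu0 A(1,2) by (simp add: mult_pos_neg)
  qed
  have "T 1 = W 1 * (p * D 1 - q * E 1)" unfolding T_def B_def using mu0 A(2) by (simp add: algebra_simps)
  hence key: "p * D 1 - q * E 1 \<ge> 0" using T1 W1 by (simp add: mult_le_0_iff)
  have x1: "x < 1" using xh by simp
  have e1: "0 \<le> e 1" "e 1 \<le> 1" "0 \<le> Y 1" using S(3)[of 1] by auto
  have "Y 1 * (1 - bin_entropy (e 1)) \<ge> Y 1 * (p - q * e 1)"
    using tangent[OF x0 x1 e1(1,2)] e1(3) unfolding p_def q_eq by (simp add: mult_left_mono)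
  moreover have "Y 1 * (p - q * e 1) \<ge> Yc 1 * (p - q * x)"
    using key unfolding D_def E_def x_def by (simp add: algebra_simps)
  moreover have "Yc 1 * (1 - bin_entropy x) = Yc 1 * (p - q * x)"
    using ident[OF x0 x1] unfolding p_def q_eq by simp
  ultimately show ?thesis unfolding Yc_def[symmetric] ec_def[symmetric] x_def[symmetric] by linarith
qed


end
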